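(* Under the setup in the context, assume in addition that the block GMRES residual $F_{j-1}^{(G)}$ has rank $L$. Then $H_j$ is singular with $\operatorname{rank}H_j=(j-1)L$ if and only if block GMRES totally stagnates at step $j$, i.e. $X_j^{(G)}=X_{j-1}^{(G)}$.
   Context: Let $n,L\ge1$, $A\in\mathbb C^{n\times n}$, $B,X_0\in\mathbb C^{n\times L}$, $F_0=B-AX_0$, and let $F_0=V_1S_0$ be a reduced QR factorization ($V_1\in\mathbb C^{n\times L}$ with orthonormal columns, $S_0\in\mathbb C^{L\times L}$ upper triangular). Fix $j\ge2$. The block Arnoldi process (possibly with dependent basis vectors replaced by new orthonormal vectors) yields $W_k=[V_1,\dots,V_k]\in\mathbb C^{n\times kL}$ ($k\le j+1$) with orthonormal columns, $V_i\in\mathbb C^{n\times L}$, and the block Arnoldi relation $AW_j=W_{j+1}\bar H_j$, where $\bar H_j=(H_{ik})\in\mathbb C^{(j+1)L\times jL}$ has $L\times L$ blocks $H_{ik}$, is block upper Hessenberg ($H_{ik}=0$ for $i>k+1$), and each $H_{k+1,k}$ is upper triangular. For $k\le j$, $\bar H_k$ denotes the leading $(k+1)L\times kL$ submatrix of $\bar H_j$ and $H_k$ the leading $kL\times kL$ submatrix. $E^{[m]}\in\mathbb R^{mL\times L}$ denotes the first $L$ columns of $I_{mL}$. Assume $\bar H_j$ has full column rank (hence so does each $\bar H_k$, $k\le j$). For $k\ge1$, the block GMRES iterate is $X_k^{(G)}=X_0+W_kY_k^{(G)}$, where $Y_k^{(G)}\in\mathbb C^{kL\times L}$ is the unique minimizer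 of $\|\bar H_kY-E^{[k+1]}S_0\|_F$ (Frobenius norm), and $F_k^{(G)}=B-AX_k^{(G)}$. *)

theory Defs
  imports "Jordan_Normal_Form.DL_Rank" "Jordan_Normal_Form.Schur_Decomposition"
begin

definition mrank :: "complex mat \<Rightarrow> nat" where
  "mrank M = vec_space.rank (dim_row M) M"

definition lead_sub :: "complex mat \<Rightarrow> nat \<Rightarrow> nat \<Rightarrow> complex mat" where
  "lead_sub M r c = mat r c (\<lambda>(i,k). M $$ (i,k))"

definition Emat :: "nat \<Rightarrow> nat \<Rightarrow> complex mat" where
  "Emat L m = mat (m*L) L (\<lambda>(i,k). if i = k then 1 else 0)"

definition frob_sq :: "complex mat \<Rightarrow> real" where
  "frob_sq M = (\<Sum>i<dim_row M. \<Sum>k<dim_col M. (cmod (M $$ (i,k)))\<^sup>2)"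

definition orthonormal_cols :: "complex mat \<Rightarrow> bool" where
  "orthonormal_cols W \<longleftrightarrow> mat_adjoint W * W = 1\<^sub>m (dim_col W)"

(* Hb ((j+1)L x jL) is block upper Hessenberg with L x L blocks, and every
   subdiagonal block H_{k+1,k} is upper triangular. Indices are 0-based. *)
definition block_hessenberg :: "nat \<Rightarrow> nat \<Rightarrow> complex mat \<Rightarrow> bool" where
  "block_hessenberg L j Hb \<longleftrightarrow>
     Hb \<in> carrier_mat ((j+1)*L) (j*L) \<and>
     (\<forall>r c. r < (j+1)*L \<longrightarrow> c < j*L \<longrightarrow> r div L > c div L + 1 \<longrightarrow> Hb $$ (r,c) = 0) \<and>
     (\<forall>r c. r < (j+1)*L \<longrightarrow> c < j*L \<longrightarrow> r div L = c div L + 1 \<longrightarrow> r mod L > c mod L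
            \<longrightarrow> Hb $$ (r,c) = 0)"

definition lsq_min :: "nat \<Rightarrow> complex mat \<Rightarrow> complex mat \<Rightarrow> nat \<Rightarrow> complex mat \<Rightarrow> bool" where
  "lsq_min L Hb S0 k Y \<longleftrightarrow>
     Y \<in> carrier_mat (k*L) L \<and>
     (\<forall>Y' \<in> carrier_mat (k*L) L.
        frob_sq (lead_sub Hb ((k+1)*L) (k*L) * Y - Emat L (k+1) * S0)
          \<le> frob_sq (lead_sub Hb ((k+1)*L) (k*L) * Y' - Emat L (k+1) * S0))"

end

theory Submission
  imports Defs
begin

lemma mult_entry: "A \<in> carrier_mat r k \<Longrightarrow> B \<in> carrier_mat k c \<Longrightarrow> i < r \<Longrightarrow> j < c \<Longrightarrow>
   (A * B) $$ (i,j) = (\<Sum>l<k. A $$ (i,l) * B $$ (l,j))"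
  by (simp add: scalar_prod_def lessThan_atLeast0)

lemma mv_entry: "A \<in> carrier_mat r k \<Longrightarrow> x \<in> carrier_vec k \<Longrightarrow> i < r \<Longrightarrow>
   (A *\<^sub>v x) $ i = (\<Sum>l<k. A $$ (i,l) * x $ l)"
  by (simp add: scalar_prod_def lessThan_atLeast0)

lemma adj_carrier: "A \<in> carrier_mat r c \<Longrightarrow> mat_adjoint A \<in> carrier_mat c r"
  by (auto simp: mat_adjoint_def mat_of_rows_def)

lemma adj_index: "A \<in> carrier_mat r c \<Longrightarrow> i < c \<Longrightarrow> k < r \<Longrightarrow> mat_adjoint A $$ (i,k) = cnj (A $$ (k,i))"
  by (simp add: mat_adjoint_def mat_of_rows_index)

lemma ker_distinct:
  assumes A: "A \<in> carrier_mat r c" and ker: "\<And>x. x \<in> carrier_vec c \<Longrightarrow> A *\<^sub>v x = 0\<^sub>v r \<Longrightarrow> x = 0\<^sub>v c"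
  shows "distinct (cols (A :: 'a :: field mat))"
proof -
  { fix i k assume ik: "i < c" "k < c" "i \<noteq> k" "col A i = col A k"
    define x where "x = vec c (\<lambda>q. (if q = i then 1 else 0) - (if q = k then (1::'a) else 0))"
    have x: "x \<in> carrier_vec c" by (simp add: x_def)
    have "A *\<^sub>v x = 0\<^sub>v r"
    proof (rule eq_vecI)
      fix l assume l: "l < dim_vec (0\<^sub>v r :: 'a vec)"
      then have l': "l < r" by simp
      have "(A *\<^sub>v x) $ l = (\<Sum>q<c. A $$ (l,q) * ((if q = i then 1 else 0) - (if q = k then 1 else 0)))"
        using mv_entry[OF A x l'] by (simp add: x_def)
      also have "\<dots> = A $$ (l,i) - A $$ (l,k)"
      proof -
        have "(\<Sum>q<c. A $$ (l,q) * ((if q = i then 1 else 0) - (if q = k then 1 else 0)))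
           = (\<Sum>q<c. (if q = i then A $$ (l,q) else 0)) - (\<Sum>q<c. (if q = k then A $$ (l,q) else 0))"
          by (subst sum_subtractf[symmetric]) (rule sum.cong, auto)
        then show ?thesis using ik by simp
      qed
      also have "\<dots> = 0"
      proof -
        have "A $$ (l,i) = col A i $ l" using A l' ik(1) by simp
        also have "\<dots> = col A k $ l" using ik(4) by simp
        also have "\<dots> = A $$ (l,k)" using A l' ik(2) by simp
        finally show ?thesis by simp
      qed
      finally show "(A *\<^sub>v x) $ l = 0\<^sub>v r $ l" using l' by simp
    qed (use A in simp)
    then have "x = 0\<^sub>v c" using ker x by blast
    then have "x $ i = 0" using ik by simp
    then have False using ik by (simp add: x_def)
  }
  then show ?thesis using A by (auto simp: distinct_conv_nth)
qed

lemma sum3_swap: "(\<Sum>i<r. \<Sum>k<c'. \<Sum>l<c. f i k l) = (\<Sum>l<c. \<Sum>k<c'. \<Sum>i<r. (f i k l :: 'a :: comm_monoid_add))"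
proof -
  have "(\<Sum>i<r. \<Sum>k<c'. \<Sum>l<c. f i k l) = (\<Sum>i<r. \<Sum>l<c. \<Sum>k<c'. f i k l)"
    by (rule sum.cong[OF refl], rule sum.swap)
  also have "\<dots> = (\<Sum>l<c. \<Sum>i<r. \<Sum>k<c'. f i k l)" by (rule sum.swap)
  also have "\<dots> = (\<Sum>l<c. \<Sum>k<c'. \<Sum>i<r. f i k l)"
    by (rule sum.cong[OF refl], rule sum.swap)
  finally show ?thesis .
qed

lemma adj_inner:
  assumes X: "X \<in> carrier_mat r q" and A: "A \<in> carrier_mat r c" and D: "D \<in> carrier_mat c q"
  shows "(\<Sum>i<r. \<Sum>k<q. cnj (X $$ (i,k)) * (A * D) $$ (i,k))
       = (\<Sum>l<c. \<Sum>k<q. cnj ((mat_adjoint A * X) $$ (l,k)) * D $$ (l,k))"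
proof -
  have AH: "mat_adjoint A \<in> carrier_mat c r" using adj_carrier[OF A] .
  have "(\<Sum>i<r. \<Sum>k<q. cnj (X $$ (i,k)) * (A * D) $$ (i,k))
      = (\<Sum>i<r. \<Sum>k<q. \<Sum>l<c. cnj (X $$ (i,k)) * A $$ (i,l) * D $$ (l,k))"
    by (rule sum.cong[OF refl], rule sum.cong[OF refl])
       (simp add: mult_entry[OF A D] sum_distrib_left mult.assoc)
  also have "\<dots> = (\<Sum>l<c. \<Sum>k<q. \<Sum>i<r. cnj (X $$ (i,k)) * A $$ (i,l) * D $$ (l,k))"
    by (rule sum3_swap)
  also have "\<dots> = (\<Sum>l<c. \<Sum>k<q. cnj ((mat_adjoint A * X) $$ (l,k)) * D $$ (l,k))"
    by (rule sum.cong[OF refl], rule sum.cong[OF refl])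
       (simp add: mult_entry[OF AH X] adj_index[OF A] sum_distrib_right sum_distrib_left mult.commute mult.left_commute)
  finally show ?thesis .
qed

lemma cmod_diff_sq: "(cmod (a - complex_of_real t * b))\<^sup>2 = (cmod a)\<^sup>2 - 2 * t * Re (cnj a * b) + t\<^sup>2 * (cmod b)\<^sup>2"
  by (simp only: cmod_power2) (simp add: power2_eq_square algebra_simps)

lemma re_cnj_self: "Re (cnj z * z) = (cmod z)\<^sup>2"
  by (simp only: cmod_power2) (simp add: power2_eq_square)

lemma normal_eq:
  assumes A: "A \<in> carrier_mat r c" and Bm: "Bm \<in> carrier_mat r q" and Y: "Y \<in> carrier_mat c q"
    and mini: "\<forall>Y' \<in> carrier_mat c q. frob_sq (A * Y - Bm) \<le> frob_sq (A * Y' - Bm)"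
  shows "mat_adjoint A * (A * Y - Bm) = 0\<^sub>m c q"
proof -
  define R where "R = A * Y - Bm"
  define Dm where "Dm = mat_adjoint A * R"
  define Q where "Q = A * Dm"
  have R: "R \<in> carrier_mat r q" using A Y Bm by (simp add: R_def minus_carrier_mat)
  have AH: "mat_adjoint A \<in> carrier_mat c r" using adj_carrier[OF A] .
  have Dm: "Dm \<in> carrier_mat c q" using AH R by (simp add: Dm_def)
  have Q: "Q \<in> carrier_mat r q" using A Dm by (simp add: Q_def)
  define fR where "fR = (\<Sum>i<r. \<Sum>k<q. (cmod (R $$ (i,k)))\<^sup>2)"
  define fD where "fD = (\<Sum>l<c. \<Sum>k<q. (cmod (Dm $$ (l,k)))\<^sup>2)"
  define fQ where "fQ = (\<Sum>i<r. \<Sum>k<q. (cmod (Q $$ (i,k)))\<^sup>2)"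
  have fD0: "fD \<ge> 0" unfolding fD_def by (intro sum_nonneg) auto
  have fQ0: "fQ \<ge> 0" unfolding fQ_def by (intro sum_nonneg) auto
  have S: "(\<Sum>i<r. \<Sum>k<q. Re (cnj (R $$ (i,k)) * Q $$ (i,k))) = fD"
  proof -
    have "(\<Sum>i<r. \<Sum>k<q. Re (cnj (R $$ (i,k)) * Q $$ (i,k)))
        = Re (\<Sum>i<r. \<Sum>k<q. cnj (R $$ (i,k)) * Q $$ (i,k))" by (simp add: Re_sum)
    also have "\<dots> = Re (\<Sum>l<c. \<Sum>k<q. cnj (Dm $$ (l,k)) * Dm $$ (l,k))"
      unfolding Q_def Dm_def using adj_inner[OF R A Dm[unfolded Dm_def]] by simp
    also have "\<dots> = fD" unfolding fD_def by (simp only: Re_sum re_cnj_self)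
    finally show ?thesis .
  qed
  have key: "fR \<le> fR - 2 * t * fD + t\<^sup>2 * fQ" for t :: real
  proof -
    define Y' where "Y' = Y - complex_of_real t \<cdot>\<^sub>m Dm"
    have Y': "Y' \<in> carrier_mat c q" using Y Dm by (simp add: Y'_def minus_carrier_mat)
    have ent: "(A * Y' - Bm) $$ (i,k) = R $$ (i,k) - complex_of_real t * Q $$ (i,k)" if "i < r" "k < q" for i k
    proof -
      have "(A * Y') $$ (i,k) = (\<Sum>l<c. A $$ (i,l) * (Y $$ (l,k) - complex_of_real t * Dm $$ (l,k)))"
        using mult_entry[OF A Y' that] Y Dm that by (auto simp: Y'_def intro!: sum.cong)
      also have "\<dots> = (A * Y) $$ (i,k) - complex_of_real t * Q $$ (i,k)"
        using mult_entry[OF A Y that] mult_entry[OF A Dm that]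
        by (simp add: Q_def right_diff_distrib sum_subtractf sum_distrib_left mult.left_commute)
      finally show ?thesis using that A Y Bm Y' by (simp add: R_def)
    qed
    have "frob_sq (A * Y' - Bm) = (\<Sum>i<r. \<Sum>k<q. (cmod (R $$ (i,k) - complex_of_real t * Q $$ (i,k)))\<^sup>2)"
      unfolding frob_sq_def using A Y' Bm ent by simp
    also have "\<dots> = (\<Sum>i<r. \<Sum>k<q. (cmod (R $$ (i,k)))\<^sup>2 - 2 * t * Re (cnj (R $$ (i,k)) * Q $$ (i,k)) + t\<^sup>2 * (cmod (Q $$ (i,k)))\<^sup>2)"
      by (simp add: cmod_diff_sq)
    also have "\<dots> = fR - 2 * t * fD + t\<^sup>2 * fQ"
      unfolding fR_def fQ_def S[symmetric]
      by (simp only: sum.distrib sum_subtractf sum_distrib_left[symmetric])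
    finally have "frob_sq (A * Y' - Bm) = fR - 2 * t * fD + t\<^sup>2 * fQ" .
    moreover have "frob_sq (A * Y - Bm) = fR" unfolding frob_sq_def fR_def R_def using A Y Bm by simp
    ultimately show ?thesis using mini Y' by metis
  qed
  have "fD = 0"
  proof (rule ccontr)
    assume "fD \<noteq> 0"
    then have pos: "fD > 0" using fD0 by simp
    define t where "t = fD / (fQ + 1)"
    have t: "t > 0" using pos fQ0 by (simp add: t_def)
    have "2 * t * fD \<le> t\<^sup>2 * fQ" using key[of t] by simp
    then have "2 * fD \<le> t * fQ" using t by (simp add: power2_eq_square)
    also have "t * fQ < fD" using pos fQ0 by (simp add: t_def field_simps)
    finally show False using pos by simp
  qed
  then have "\<forall>l\<in>{..<c}. \<forall>k\<in>{..<q}. (cmod (Dm $$ (l,k)))\<^sup>2 = 0"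
    unfolding fD_def by (subst (asm) sum_nonneg_eq_0_iff; simp add: sum_nonneg_eq_0_iff sum_nonneg)
  then have "Dm = 0\<^sub>m c q" using Dm by (intro eq_matI) auto
  then show ?thesis by (simp add: Dm_def R_def)
qed

lemma ne_unique:
  assumes A: "(A :: complex mat) \<in> carrier_mat r c" and ker: "\<And>x. x \<in> carrier_vec c \<Longrightarrow> A *\<^sub>v x = 0\<^sub>v r \<Longrightarrow> x = 0\<^sub>v c"
    and Bm: "Bm \<in> carrier_mat r q" and Y1: "Y1 \<in> carrier_mat c q" and Y2: "Y2 \<in> carrier_mat c q"
    and N1: "mat_adjoint A * (A * Y1 - Bm) = 0\<^sub>m c q"
    and N2: "mat_adjoint A * (A * Y2 - Bm) = 0\<^sub>m c q"
  shows "Y1 = Y2"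
proof -
  define D where "D = Y1 - Y2"
  define P where "P = A * D"
  have D: "D \<in> carrier_mat c q" using Y1 Y2 by (simp add: D_def minus_carrier_mat)
  have P: "P \<in> carrier_mat r q" using A D by (simp add: P_def)
  have AH: "mat_adjoint A \<in> carrier_mat c r" using adj_carrier[OF A] .
  have R1: "A * Y1 - Bm \<in> carrier_mat r q" using A Y1 Bm by (simp add: minus_carrier_mat)
  have R2: "A * Y2 - Bm \<in> carrier_mat r q" using A Y2 Bm by (simp add: minus_carrier_mat)
  have Pent: "P $$ (i,k) = (A * Y1 - Bm) $$ (i,k) - (A * Y2 - Bm) $$ (i,k)" if "i < r" "k < q" for i k
  proof -
    have "P $$ (i,k) = (\<Sum>l<c. A $$ (i,l) * (Y1 $$ (l,k) - Y2 $$ (l,k)))"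
      unfolding P_def using mult_entry[OF A D that] Y1 Y2 that by (auto simp: D_def intro!: sum.cong)
    also have "\<dots> = (A * Y1) $$ (i,k) - (A * Y2) $$ (i,k)"
      using mult_entry[OF A Y1 that] mult_entry[OF A Y2 that]
      by (simp add: right_diff_distrib sum_subtractf)
    finally show ?thesis using that A Y1 Y2 Bm by simp
  qed
  have G: "(mat_adjoint A * P) $$ (l,k) = 0" if "l < c" "k < q" for l k
  proof -
    have "(mat_adjoint A * P) $$ (l,k) = (\<Sum>i<r. mat_adjoint A $$ (l,i) * ((A * Y1 - Bm) $$ (i,k) - (A * Y2 - Bm) $$ (i,k)))"
      using mult_entry[OF AH P that] Pent that by (auto intro!: sum.cong)
    also have "\<dots> = (mat_adjoint A * (A * Y1 - Bm)) $$ (l,k) - (mat_adjoint A * (A * Y2 - Bm)) $$ (l,k)"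
      using mult_entry[OF AH R1 that] mult_entry[OF AH R2 that]
      by (simp add: right_diff_distrib sum_subtractf)
    also have "\<dots> = 0" using N1 N2 that by simp
    finally show ?thesis .
  qed
  have "(\<Sum>i<r. \<Sum>k<q. cnj (P $$ (i,k)) * (A * D) $$ (i,k))
       = (\<Sum>l<c. \<Sum>k<q. cnj ((mat_adjoint A * P) $$ (l,k)) * D $$ (l,k))"
    by (rule adj_inner[OF P A D])
  also have "\<dots> = 0" using G by simp
  finally have "Re (\<Sum>i<r. \<Sum>k<q. cnj (P $$ (i,k)) * P $$ (i,k)) = 0" by (simp add: P_def)
  then have "(\<Sum>i<r. \<Sum>k<q. (cmod (P $$ (i,k)))\<^sup>2) = 0" by (simp only: Re_sum re_cnj_self)
  then have P0: "\<forall>i\<in>{..<r}. \<forall>k\<in>{..<q}. (cmod (P $$ (i,k)))\<^sup>2 = 0"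
    by (subst (asm) sum_nonneg_eq_0_iff; simp add: sum_nonneg_eq_0_iff sum_nonneg)
  have "D $$ (l,k) = 0" if "l < c" "k < q" for l k
  proof -
    have cD: "col D k \<in> carrier_vec c" using D by (simp add: carrier_vecI)
    have "A *\<^sub>v col D k = 0\<^sub>v r"
    proof (rule eq_vecI)
      fix i assume "i < dim_vec (0\<^sub>v r :: complex vec)"
      then have i: "i < r" by simp
      have "(A *\<^sub>v col D k) $ i = P $$ (i,k)" using i that A D by (simp add: P_def)
      also have "\<dots> = 0" using P0 i that by simp
      finally show "(A *\<^sub>v col D k) $ i = 0\<^sub>v r $ i" using i by simp
    qed (use A in simp)
    then have "col D k = 0\<^sub>v c" using ker cD by blast
    then have "col D k $ l = 0" using that by simp
    then show ?thesis using that D by simp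
  qed
  then show ?thesis using Y1 Y2 by (intro eq_matI) (auto simp: D_def dest!: spec)
qed

lemma lead_sub_carrier[simp]: "lead_sub M r c \<in> carrier_mat r c"
  by (simp add: lead_sub_def)
lemma lead_sub_index[simp]: "i < r \<Longrightarrow> k < c \<Longrightarrow> lead_sub M r c $$ (i,k) = M $$ (i,k)"
  by (simp add: lead_sub_def)
lemma lead_sub_dims[simp]: "dim_row (lead_sub M r c) = r" "dim_col (lead_sub M r c) = c"
  by (simp_all add: lead_sub_def)
lemma Emat_carrier[simp]: "Emat L m \<in> carrier_mat (m*L) L"
  by (simp add: Emat_def)

lemma sum_trunc:
  assumes "m \<le> (M::nat)" "\<And>r. m \<le> r \<Longrightarrow> r < M \<Longrightarrow> f r = 0"
  shows "(\<Sum>r<M. f r) = (\<Sum>r<m. f r)"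
proof (rule sum.mono_neutral_right)
  show "finite {..<M}" by simp
  show "{..<m} \<subseteq> {..<M}" using assms(1) by auto
  show "\<forall>i\<in>{..<M} - {..<m}. f i = 0" using assms(2) by auto
qed

lemma sum_lessThan_add: "(\<Sum>c<p+(L::nat). f c) = (\<Sum>c<p. f c) + (\<Sum>d<L. f (p+d))"
  by (induct L) (auto simp: add_ac)

lemma Emat_mult:
  assumes S0: "S0 \<in> carrier_mat L L" and r: "r < mm*L" and k: "k < L"
  shows "(Emat L mm * S0) $$ (r,k) = (if r < L then S0 $$ (r,k) else 0)"
proof -
  have "(Emat L mm * S0) $$ (r,k) = (\<Sum>l<L. (if r = l then 1 else 0) * S0 $$ (l,k))"
    using mult_entry[OF Emat_carrier S0 r k] r by (simp add: Emat_def)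
  also have "\<dots> = (\<Sum>l<L. (if l = r then S0 $$ (l,k) else 0))"
    by (rule sum.cong) auto
  also have "\<dots> = (if r < L then S0 $$ (r,k) else 0)" by simp
  finally show ?thesis .
qed

lemma cross:
  assumes A: "A \<in> carrier_mat r a" and Bm: "Bm \<in> carrier_mat r b" and x: "x \<in> carrier_vec a"
    and y: "y \<in> carrier_vec b" and O: "mat_adjoint A * Bm = 0\<^sub>m a b"
  shows "(\<Sum>i<r. cnj ((Bm *\<^sub>v y) $ i) * (A *\<^sub>v x) $ i) = 0"
proof -
  have AH: "mat_adjoint A \<in> carrier_mat a r" using adj_carrier[OF A] .
  have z: "(\<Sum>i<r. cnj (A $$ (i,c)) * Bm $$ (i,k)) = 0" if "c < a" "k < b" for c k
  proof -
    have "(\<Sum>i<r. cnj (A $$ (i,c)) * Bm $$ (i,k)) = (mat_adjoint A * Bm) $$ (c,k)"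
      using mult_entry[OF AH Bm that] adj_index[OF A] that by simp
    then show ?thesis using O that by simp
  qed
  have "(\<Sum>i<r. cnj ((Bm *\<^sub>v y) $ i) * (A *\<^sub>v x) $ i)
      = (\<Sum>i<r. \<Sum>c<a. \<Sum>k<b. cnj (Bm $$ (i,k)) * cnj (y $ k) * (A $$ (i,c) * x $ c))"
    by (rule sum.cong[OF refl])
       (simp add: mv_entry[OF A x] mv_entry[OF Bm y] cnj_sum sum_distrib_left sum_distrib_right)
  also have "\<dots> = (\<Sum>k<b. \<Sum>c<a. \<Sum>i<r. cnj (Bm $$ (i,k)) * cnj (y $ k) * (A $$ (i,c) * x $ c))"
    by (rule sum3_swap)
  also have "\<dots> = (\<Sum>k<b. \<Sum>c<a. cnj (y $ k) * x $ c * cnj (\<Sum>i<r. cnj (A $$ (i,c)) * Bm $$ (i,k)))"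
    by (rule sum.cong[OF refl], rule sum.cong[OF refl])
       (simp add: cnj_sum sum_distrib_left mult_ac)
  also have "\<dots> = 0" using z by simp
  finally show ?thesis .
qed

lemma self_inner_zero:
  assumes "(\<Sum>i<r. cnj (v $ i) * v $ i) = 0" and v: "v \<in> carrier_vec r"
  shows "v = 0\<^sub>v r"
proof -
  have "Re (\<Sum>i<r. cnj (v $ i) * v $ i) = 0" using assms by simp
  then have "(\<Sum>i<r. (cmod (v $ i))\<^sup>2) = 0" by (simp only: Re_sum re_cnj_self)
  then have "\<forall>i\<in>{..<r}. (cmod (v $ i))\<^sup>2 = 0" by (simp add: sum_nonneg_eq_0_iff)
  then show ?thesis using v by (intro eq_vecI) auto
qed

lemma inv_ker:
  assumes H: "(H :: complex mat) \<in> carrier_mat m m" and inv: "invertible_mat H"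
    and x: "x \<in> carrier_vec m" and Hx: "H *\<^sub>v x = 0\<^sub>v m"
  shows "x = 0\<^sub>v m"
proof -
  obtain B' where B1: "H * B' = 1\<^sub>m (dim_row H)" and B2: "B' * H = 1\<^sub>m (dim_row B')"
    using inv unfolding invertible_mat_def inverts_mat_def by blast
  have "dim_col B' = m" using B1 H by (metis carrier_matD(1) dim_col_mat(1) index_mult_mat(3) index_one_mat(3))
  moreover have "dim_row B' = m" using B2 H by (metis carrier_matD(2) index_mult_mat(3) index_one_mat(3))
  ultimately have B': "B' \<in> carrier_mat m m" by auto
  have "x = (B' * H) *\<^sub>v x" using B2 B' x by simp
  also have "\<dots> = B' *\<^sub>v (H *\<^sub>v x)" using B' H x by (simp add: assoc_mult_mat_vec)
  also have "\<dots> = 0\<^sub>v m" using Hx B' by (auto intro!: eq_vecI simp: scalar_prod_def)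
  finally show ?thesis .
qed

context vec_space begin

lemma ker_indpt:
  assumes A: "A \<in> carrier_mat n c" and ker: "\<And>x. x \<in> carrier_vec c \<Longrightarrow> A *\<^sub>v x = 0\<^sub>v n \<Longrightarrow> x = 0\<^sub>v c"
  shows "lin_indpt (set (cols A))"
proof (rule ccontr)
  assume "\<not> lin_indpt (set (cols A))"
  then obtain v where "v \<in> carrier_vec c" "v \<noteq> 0\<^sub>v c" "A *\<^sub>v v = 0\<^sub>v n"
    using lin_depE[OF A _ ker_distinct[OF A ker]] by blast
  then show False using ker by blast
qed

lemma ker_rank:
  assumes A: "A \<in> carrier_mat n c" and ker: "\<And>x. x \<in> carrier_vec c \<Longrightarrow> A *\<^sub>v x = 0\<^sub>v n \<Longrightarrow> x = 0\<^sub>v c"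
  shows "rank A = c"
  using lin_indpt_full_rank[OF A ker_distinct[OF A ker] ker_indpt[OF A ker]] .

lemma rank_ker:
  assumes A: "A \<in> carrier_mat n c" and rk: "rank A = c" and x: "x \<in> carrier_vec c" and Ax: "A *\<^sub>v x = 0\<^sub>v n"
  shows "x = 0\<^sub>v c"
proof (rule ccontr)
  assume nz: "x \<noteq> 0\<^sub>v c"
  show False
  proof (cases "distinct (cols A)")
    case True
    then have "lin_indpt (set (cols A))" using full_rank_lin_indpt A rk by blast
    with lin_depI[OF A x nz Ax True] show False by blast
  next
    case False
    obtain S where S: "maximal S (\<lambda>T. T \<subseteq> set (cols A) \<and> lin_indpt T)"
      using maximal_exists[of "(\<lambda>T. T \<subseteq> set (cols A) \<and> lin_indpt T)" "card (set (cols A))" "{}"]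
      by (meson List.finite_set card_mono empty_iff empty_subsetI finite_lin_indpt2 rev_finite_subset)
    then have "card S \<le> card (set (cols A))" by (simp add: card_mono maximal_def)
    moreover have "card (set (cols A)) < c"
      using False A card_distinct[of "cols A"] card_length[of "cols A"] by fastforce
    ultimately show False using rank_card_indpt[OF A S] rk by simp
  qed
qed

lemma ker_solve:
  assumes A: "(A :: 'a mat) \<in> carrier_mat n n" and ker: "\<And>x. x \<in> carrier_vec n \<Longrightarrow> A *\<^sub>v x = 0\<^sub>v n \<Longrightarrow> x = 0\<^sub>v n"
    and v: "v \<in> carrier_vec n"
  shows "\<exists>x\<in>carrier_vec n. A *\<^sub>v x = v"
proof -
  have d: "distinct (cols A)" by (rule ker_distinct[OF A ker])
  have sub: "set (cols A) \<subseteq> carrier_vec n" using A cols_dim by blast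
  have "basis (set (cols A))"
    by (rule dim_li_is_basis) (use d sub ker_indpt[OF A ker] A in \<open>auto simp: distinct_card dim_is_n\<close>)
  then have "span (set (cols A)) = carrier_vec n" by (simp add: basis_def)
  then have "v \<in> col_space A" using v by (simp add: col_space_def)
  then show ?thesis using col_space_eq[OF A] A by auto
qed

end

theorem mainTheorem6:
  fixes n L j :: nat
    and A B X0 V1 S0 W Hb Yj Yjm1 :: "complex mat"
  assumes "n \<ge> 1" and "L \<ge> 1" and "j \<ge> 2"
    and A: "A \<in> carrier_mat n n"
    and B: "B \<in> carrier_mat n L"
    and X0: "X0 \<in> carrier_mat n L"
    and V1: "V1 \<in> carrier_mat n L" and "orthonormal_cols V1"
    and S0: "S0 \<in> carrier_mat L L" and "upper_triangular S0"
    and QR: "B - A * X0 = V1 * S0"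
    and W: "W \<in> carrier_mat n ((j+1)*L)" and "orthonormal_cols W"
    and W1: "lead_sub W n L = V1"
    and Hb: "block_hessenberg L j Hb"
    and arnoldi: "A * lead_sub W n (j*L) = W * Hb"
    and fullrank: "mrank Hb = j*L"
    and Yj: "lsq_min L Hb S0 j Yj"
    and Yjm1: "lsq_min L Hb S0 (j-1) Yjm1"
    and resrank: "mrank (B - A * (X0 + lead_sub W n ((j-1)*L) * Yjm1)) = L"
  shows "(\<not> invertible_mat (lead_sub Hb (j*L) (j*L)) \<and>
          mrank (lead_sub Hb (j*L) (j*L)) = (j-1)*L)
         \<longleftrightarrow> X0 + lead_sub W n (j*L) * Yj = X0 + lead_sub W n ((j-1)*L) * Yjm1"
proof -
  note L1 = \<open>L \<ge> 1\<close> and j2 = \<open>j \<ge> 2\<close>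
  define m where "m = j*L"
  define p where "p = (j-1)*L"
  have mp: "m = p + L" using j2 by (cases j) (simp_all add: m_def p_def)
  have mL: "(j+1)*L = m+L" by (simp add: m_def)
  have j1: "1 \<le> j - 1" using j2 by simp
  have Lp: "L \<le> p" using mult_le_mono1[OF j1, of L] by (simp add: p_def)
  have pm: "p < m" using mp L1 by simp
  have Lm: "L \<le> m" using mp by simp
  have "Hb \<in> carrier_mat ((j+1)*L) (j*L)" using Hb[unfolded block_hessenberg_def] by (rule conjunct1)
  then have Hb_c: "Hb \<in> carrier_mat (m+L) m" using mL by (simp only: m_def)
  have W_c: "W \<in> carrier_mat n (m+L)" using W by (simp only: mL)
  have hz: "Hb $$ (r,c) = 0" if r: "r < m+L" "m \<le> r" and c: "c < p" for r c
  proof -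
    have a: "j \<le> r div L" using r(2) L1 by (simp add: m_def less_eq_div_iff_mult_less_eq)
    have b: "c div L < j - 1" using c L1 by (simp add: p_def div_less_iff_less_mult)
    have "r div L > c div L + 1" using a b by linarith
    moreover have "r < (j+1)*L" "c < j*L" using r c mL pm by (auto simp: m_def)
    ultimately show ?thesis using Hb unfolding block_hessenberg_def by blast
  qed
  define H where "H = lead_sub Hb m m"
  define Hb1 where "Hb1 = lead_sub Hb m p"
  define E1 where "E1 = Emat L j"
  define Ej where "Ej = Emat L (j+1)"
  have H_c: "H \<in> carrier_mat m m" by (simp add: H_def)
  have Hb1_c: "Hb1 \<in> carrier_mat m p" by (simp add: Hb1_def)
  have E1_c: "E1 \<in> carrier_mat m L" by (simp add: E1_def m_def)
  have Ej_c: "Ej \<in> carrier_mat (m+L) L" using Emat_carrier[of L "j+1"] by (simp only: Ej_def mL)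
  have E1S: "E1 * S0 \<in> carrier_mat m L" using E1_c S0 by simp
  have EjS: "Ej * S0 \<in> carrier_mat (m+L) L" using Ej_c S0 by simp
  have lsHb: "lead_sub Hb ((j+1)*L) (j*L) = Hb"
    using Hb_c mL by (intro eq_matI) (auto simp: m_def)
  have lsHb1: "lead_sub Hb ((j-1+1)*L) ((j-1)*L) = Hb1"
    using j2 by (simp add: Hb1_def m_def p_def)
  have Yj_c: "Yj \<in> carrier_mat m L" and Yj_min: "\<forall>Y' \<in> carrier_mat m L. frob_sq (Hb * Yj - Ej * S0) \<le> frob_sq (Hb * Y' - Ej * S0)"
    using Yj unfolding lsq_min_def lsHb by (simp_all add: m_def Ej_def)
  have Yjm1_c: "Yjm1 \<in> carrier_mat p L" and Yjm1_min: "\<forall>Y' \<in> carrier_mat p L. frob_sq (Hb1 * Yjm1 - E1 * S0) \<le> frob_sq (Hb1 * Y' - E1 * S0)"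
    using Yjm1 j2 unfolding lsq_min_def lsHb1 by (simp_all add: p_def E1_def)
  have NEj: "mat_adjoint Hb * (Hb * Yj - Ej * S0) = 0\<^sub>m m L"
    by (rule normal_eq[OF Hb_c EjS Yj_c Yj_min])
  define R where "R = Hb1 * Yjm1 - E1 * S0"
  have R_c: "R \<in> carrier_mat m L" using Hb1_c Yjm1_c E1S by (simp add: R_def minus_carrier_mat)
  have NE1: "mat_adjoint Hb1 * R = 0\<^sub>m p L"
    unfolding R_def by (rule normal_eq[OF Hb1_c E1S Yjm1_c Yjm1_min])
  have kerHb: "x = 0\<^sub>v m" if "x \<in> carrier_vec m" "Hb *\<^sub>v x = 0\<^sub>v (m+L)" for x
  proof -
    have "vec_space.rank (m+L) Hb = m" using fullrank Hb_c by (simp add: mrank_def m_def)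
    then show ?thesis using vec_space.rank_ker[OF Hb_c _ that] by blast
  qed
  have kerHb1: "x = 0\<^sub>v p" if x: "x \<in> carrier_vec p" and Hx: "Hb1 *\<^sub>v x = 0\<^sub>v m" for x
  proof -
    define x' where "x' = vec m (\<lambda>i. if i < p then x $ i else 0)"
    have x': "x' \<in> carrier_vec m" by (simp add: x'_def)
    have "Hb *\<^sub>v x' = 0\<^sub>v (m+L)"
    proof (rule eq_vecI)
      fix r assume "r < dim_vec (0\<^sub>v (m+L) :: complex vec)"
      then have r: "r < m+L" by simp
      have "(Hb *\<^sub>v x') $ r = (\<Sum>c<m. Hb $$ (r,c) * x' $ c)" by (rule mv_entry[OF Hb_c x' r])
      also have "\<dots> = (\<Sum>c<p. Hb $$ (r,c) * x $ c)"
        by (subst sum_trunc[of p m]) (use pm in \<open>auto simp: x'_def\<close>)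
      also have "\<dots> = 0"
      proof (cases "r < m")
        case True
        have "(\<Sum>c<p. Hb $$ (r,c) * x $ c) = (Hb1 *\<^sub>v x) $ r"
          using mv_entry[OF Hb1_c x True] True by (simp add: Hb1_def)
        then show ?thesis using Hx True by simp
      next
        case False
        then show ?thesis using hz r by simp
      qed
      finally show "(Hb *\<^sub>v x') $ r = 0\<^sub>v (m+L) $ r" using r by simp
    qed (use Hb_c in simp)
    then have x'0: "x' = 0\<^sub>v m" using kerHb x' by blast
    have "x $ i = 0" if "i < p" for i
    proof -
      have "x' $ i = 0\<^sub>v m $ i" using x'0 by simp
      then show ?thesis using that pm by (simp add: x'_def)
    qed
    then show ?thesis using x by (intro eq_vecI) auto
  qed
  define Wj where "Wj = lead_sub W n m"
  define Wp where "Wp = lead_sub W n p"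
  have Wj_c: "Wj \<in> carrier_mat n m" by (simp add: Wj_def)
  have Wp_c: "Wp \<in> carrier_mat n p" by (simp add: Wp_def)
  define Z where "Z = mat m L (\<lambda>(i,k). if i < p then Yjm1 $$ (i,k) else 0)"
  have Z_c: "Z \<in> carrier_mat m L" by (simp add: Z_def)
  have WZ: "Wj * Z = Wp * Yjm1"
  proof (rule eq_matI)
    fix i k assume ik: "i < dim_row (Wp * Yjm1)" "k < dim_col (Wp * Yjm1)"
    then have i: "i < n" and k: "k < L" using Wp_c Yjm1_c by auto
    have "(Wj * Z) $$ (i,k) = (\<Sum>c<m. W $$ (i,c) * Z $$ (c,k))"
      using mult_entry[OF Wj_c Z_c i k] i by (simp add: Wj_def)
    also have "\<dots> = (\<Sum>c<p. W $$ (i,c) * Yjm1 $$ (c,k))"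
      by (subst sum_trunc[of p m]) (use pm k in \<open>auto simp: Z_def\<close>)
    also have "\<dots> = (Wp * Yjm1) $$ (i,k)"
      using mult_entry[OF Wp_c Yjm1_c i k] i by (simp add: Wp_def)
    finally show "(Wj * Z) $$ (i,k) = (Wp * Yjm1) $$ (i,k)" .
  qed (use Wj_c Z_c Wp_c Yjm1_c in auto)
  have WHW: "mat_adjoint Wj * Wj = 1\<^sub>m m"
  proof (rule eq_matI)
    have WW: "mat_adjoint W * W = 1\<^sub>m (m+L)" using \<open>orthonormal_cols W\<close> W_c by (simp add: orthonormal_cols_def)
    fix a b assume ab: "a < dim_row (1\<^sub>m m :: complex mat)" "b < dim_col (1\<^sub>m m :: complex mat)"
    then have a: "a < m" and b: "b < m" by auto
    have "(mat_adjoint Wj * Wj) $$ (a,b) = (\<Sum>i<n. cnj (W $$ (i,a)) * W $$ (i,b))"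
      using mult_entry[OF adj_carrier[OF Wj_c] Wj_c a b] adj_index[OF Wj_c] a b by (simp add: Wj_def)
    also have "\<dots> = (mat_adjoint W * W) $$ (a,b)"
      using mult_entry[OF adj_carrier[OF W_c] W_c, of a b] adj_index[OF W_c] a b by simp
    also have "\<dots> = 1\<^sub>m m $$ (a,b)" using WW a b by simp
    finally show "(mat_adjoint Wj * Wj) $$ (a,b) = 1\<^sub>m m $$ (a,b)" .
  qed (use Wj_c adj_carrier[OF Wj_c] in auto)
  have stag_iff: "(X0 + lead_sub W n (j*L) * Yj = X0 + lead_sub W n ((j-1)*L) * Yjm1) \<longleftrightarrow> Yj = Z"
  proof
    assume eq: "X0 + lead_sub W n (j*L) * Yj = X0 + lead_sub W n ((j-1)*L) * Yjm1"
    have "Wj * Yj = Wp * Yjm1"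
    proof (rule eq_matI)
      fix i k assume "i < dim_row (Wp * Yjm1)" "k < dim_col (Wp * Yjm1)"
      then have i: "i < n" and k: "k < L" using Wp_c Yjm1_c by auto
      have "(X0 + Wj * Yj) $$ (i,k) = (X0 + Wp * Yjm1) $$ (i,k)" using eq by (simp add: Wj_def Wp_def m_def p_def)
      then show "(Wj * Yj) $$ (i,k) = (Wp * Yjm1) $$ (i,k)" using i k X0 Wj_c Yj_c Wp_c Yjm1_c by simp
    qed (use Wj_c Yj_c Wp_c Yjm1_c in auto)
    then have "Wj * Yj = Wj * Z" using WZ by simp
    then have "mat_adjoint Wj * (Wj * Yj) = mat_adjoint Wj * (Wj * Z)" by simp
    then have "(mat_adjoint Wj * Wj) * Yj = (mat_adjoint Wj * Wj) * Z"
      using assoc_mult_mat[OF adj_carrier[OF Wj_c] Wj_c Yj_c] assoc_mult_mat[OF adj_carrier[OF Wj_c] Wj_c Z_c] by simp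
    then show "Yj = Z" using WHW Yj_c Z_c by simp
  next
    assume "Yj = Z"
    then show "X0 + lead_sub W n (j*L) * Yj = X0 + lead_sub W n ((j-1)*L) * Yjm1"
      using WZ by (simp add: Wj_def Wp_def m_def p_def)
  qed
  define R' where "R' = mat (m+L) L (\<lambda>(r,k). if r < m then R $$ (r,k) else 0)"
  have R'_c: "R' \<in> carrier_mat (m+L) L" by (simp add: R'_def)
  have B1: "Hb * Z - Ej * S0 = R'"
  proof (rule eq_matI)
    fix r k assume "r < dim_row R'" "k < dim_col R'"
    then have r: "r < m+L" and k: "k < L" by (auto simp: R'_def)
    have HZ: "(Hb * Z) $$ (r,k) = (\<Sum>c<p. Hb $$ (r,c) * Yjm1 $$ (c,k))"
    proof -
      have "(Hb * Z) $$ (r,k) = (\<Sum>c<m. Hb $$ (r,c) * Z $$ (c,k))" by (rule mult_entry[OF Hb_c Z_c r k])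
      also have "\<dots> = (\<Sum>c<p. Hb $$ (r,c) * Yjm1 $$ (c,k))"
        by (subst sum_trunc[of p m]) (use pm k in \<open>auto simp: Z_def\<close>)
      finally show ?thesis .
    qed
    have ES: "(Ej * S0) $$ (r,k) = (if r < L then S0 $$ (r,k) else 0)"
      using Emat_mult[OF S0, of r "j+1" k] r k mL by (simp add: Ej_def)
    have m1: "(Hb * Z - Ej * S0) $$ (r,k) = (Hb*Z)$$(r,k) - (Ej*S0)$$(r,k)"
      by (rule index_minus_mat(1)) (use EjS r k in auto)
    show "(Hb * Z - Ej * S0) $$ (r,k) = R' $$ (r,k)"
    proof (cases "r < m")
      case True
      have "(Hb1 * Yjm1) $$ (r,k) = (\<Sum>c<p. Hb $$ (r,c) * Yjm1 $$ (c,k))"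
        using mult_entry[OF Hb1_c Yjm1_c True k] True by (simp add: Hb1_def)
      moreover have "(E1 * S0) $$ (r,k) = (if r < L then S0 $$ (r,k) else 0)"
        using Emat_mult[OF S0, of r j k] True k by (simp add: E1_def m_def)
      moreover have "R $$ (r,k) = (Hb1 * Yjm1) $$ (r,k) - (E1 * S0) $$ (r,k)"
        unfolding R_def by (rule index_minus_mat(1)) (use E1S True k in auto)
      moreover have "R' $$ (r,k) = R $$ (r,k)" using True k r by (simp add: R'_def)
      ultimately show ?thesis using True HZ ES m1 by simp
    next
      case False
      then have "(Hb * Z) $$ (r,k) = 0" using HZ hz r by simp
      moreover have "(Ej * S0) $$ (r,k) = 0" using ES False Lm by simp
      moreover have "R' $$ (r,k) = 0" using False k r by (simp add: R'_def)
      ultimately show ?thesis using m1 by simp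
    qed
  qed (use Hb_c Z_c EjS in \<open>auto simp: R'_def\<close>)
  have B2: "mat_adjoint Hb * R' = mat_adjoint H * R"
  proof (rule eq_matI)
    fix c k assume "c < dim_row (mat_adjoint H * R)" "k < dim_col (mat_adjoint H * R)"
    then have c: "c < m" and k: "k < L" using adj_carrier[OF H_c] R_c by auto
    have "(mat_adjoint Hb * R') $$ (c,k) = (\<Sum>r<m+L. cnj (Hb $$ (r,c)) * R' $$ (r,k))"
      using mult_entry[OF adj_carrier[OF Hb_c] R'_c c k] adj_index[OF Hb_c] c by simp
    also have "\<dots> = (\<Sum>r<m. cnj (Hb $$ (r,c)) * R $$ (r,k))"
      by (subst sum_trunc[of m "m+L"]) (use k in \<open>auto simp: R'_def\<close>)
    also have "\<dots> = (mat_adjoint H * R) $$ (c,k)"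
      using mult_entry[OF adj_carrier[OF H_c] R_c c k] adj_index[OF H_c] c by (simp add: H_def)
    finally show "(mat_adjoint Hb * R') $$ (c,k) = (mat_adjoint H * R) $$ (c,k)" .
  qed (use adj_carrier[OF Hb_c] adj_carrier[OF H_c] R_c R'_c in auto)
  have YZ_iff: "Yj = Z \<longleftrightarrow> mat_adjoint H * R = 0\<^sub>m m L"
  proof
    assume "Yj = Z"
    then show "mat_adjoint H * R = 0\<^sub>m m L" using NEj B1 B2 by simp
  next
    assume O: "mat_adjoint H * R = 0\<^sub>m m L"
    have NEZ: "mat_adjoint Hb * (Hb * Z - Ej * S0) = 0\<^sub>m m L" using O B1 B2 by simp
    show "Yj = Z" by (rule ne_unique[OF Hb_c kerHb EjS Yj_c Z_c NEj NEZ])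
  qed
  have AW: "A * Wp = Wj * Hb1"
  proof (rule eq_matI)
    fix i c assume "i < dim_row (Wj * Hb1)" "c < dim_col (Wj * Hb1)"
    then have i: "i < n" and c: "c < p" using Wj_c Hb1_c by auto
    have cm: "c < m" using c pm by simp
    have "(A * Wp) $$ (i,c) = (\<Sum>l<n. A $$ (i,l) * W $$ (l,c))"
      using mult_entry[OF A Wp_c i c] c by (simp add: Wp_def)
    also have "\<dots> = (A * Wj) $$ (i,c)"
      using mult_entry[OF A Wj_c i cm] cm by (simp add: Wj_def)
    also have "\<dots> = (W * Hb) $$ (i,c)" using arnoldi by (simp add: Wj_def m_def)
    also have "\<dots> = (\<Sum>r<m+L. W $$ (i,r) * Hb $$ (r,c))" by (rule mult_entry[OF W_c Hb_c i cm])
    also have "\<dots> = (\<Sum>r<m. W $$ (i,r) * Hb $$ (r,c))"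
      by (subst sum_trunc[of m "m+L"]) (use hz c in auto)
    also have "\<dots> = (Wj * Hb1) $$ (i,c)"
      using mult_entry[OF Wj_c Hb1_c i c] c i by (auto simp: Wj_def Hb1_def intro!: sum.cong)
    finally show "(A * Wp) $$ (i,c) = (Wj * Hb1) $$ (i,c)" .
  qed (use A Wp_c Wj_c Hb1_c in auto)
  have V1S: "V1 * S0 = Wj * (E1 * S0)"
  proof (rule eq_matI)
    fix i k assume "i < dim_row (Wj * (E1 * S0))" "k < dim_col (Wj * (E1 * S0))"
    then have i: "i < n" and k: "k < L" using Wj_c E1S by auto
    have "(Wj * (E1 * S0)) $$ (i,k) = (\<Sum>c<m. W $$ (i,c) * (E1 * S0) $$ (c,k))"
      using mult_entry[OF Wj_c E1S i k] i by (auto simp: Wj_def intro!: sum.cong)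
    also have "\<dots> = (\<Sum>c<m. W $$ (i,c) * (if c < L then S0 $$ (c,k) else 0))"
      by (rule sum.cong[OF refl]) (use Emat_mult[OF S0, of _ j k] k in \<open>auto simp: E1_def m_def\<close>)
    also have "\<dots> = (\<Sum>c<L. W $$ (i,c) * S0 $$ (c,k))"
      by (subst sum_trunc[of L m]) (use Lm in auto)
    also have "\<dots> = (V1 * S0) $$ (i,k)"
      using mult_entry[OF V1 S0 i k] W1[symmetric] i by (auto intro!: sum.cong)
    finally show "(V1 * S0) $$ (i,k) = (Wj * (E1 * S0)) $$ (i,k)" by simp
  qed (use V1 S0 Wj_c E1S in auto)
  define N where "N = E1 * S0 - Hb1 * Yjm1"
  have N_c: "N \<in> carrier_mat m L" using E1S Hb1_c Yjm1_c by (simp add: N_def minus_carrier_mat)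
  define F where "F = B - A * (X0 + lead_sub W n ((j-1)*L) * Yjm1)"
  have F_eq: "F = Wj * N"
  proof -
    have a: "A * (X0 + Wp * Yjm1) = A * X0 + A * (Wp * Yjm1)"
      by (rule mult_add_distrib_mat[OF A X0]) (use Wp_c Yjm1_c in simp)
    have b: "A * (Wp * Yjm1) = Wj * (Hb1 * Yjm1)"
      using assoc_mult_mat[OF A Wp_c Yjm1_c] AW assoc_mult_mat[OF Wj_c Hb1_c Yjm1_c] by simp
    have c: "Wj * N = Wj * (E1 * S0) - Wj * (Hb1 * Yjm1)"
      unfolding N_def by (rule mult_minus_distrib_mat[OF Wj_c E1S]) (use Hb1_c Yjm1_c in simp)
    have F': "F = B - (A * X0 + Wj * (Hb1 * Yjm1))" unfolding F_def using a b by (simp add: Wp_def p_def)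
    show ?thesis
    proof (rule eq_matI)
      fix i k assume "i < dim_row (Wj * N)" "k < dim_col (Wj * N)"
      then have i: "i < n" and k: "k < L" using Wj_c N_c by auto
      have "(B - A * X0) $$ (i,k) = (Wj * (E1 * S0)) $$ (i,k)" using QR V1S by simp
      then show "F $$ (i,k) = (Wj * N) $$ (i,k)"
        using i k F' c B A X0 Wj_c Hb1_c Yjm1_c E1S by simp
    qed (use F' c B Wj_c N_c in auto)
  qed
  have F_c: "F \<in> carrier_mat n L" using Wj_c N_c F_eq by simp
  have kerR: "x = 0\<^sub>v L" if x: "x \<in> carrier_vec L" and Rx: "R *\<^sub>v x = 0\<^sub>v m" for x
  proof -
    have Nx: "N *\<^sub>v x = 0\<^sub>v m"
    proof (rule eq_vecI)
      fix i assume "i < dim_vec (0\<^sub>v m :: complex vec)"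
      then have i: "i < m" by simp
      have "(N *\<^sub>v x) $ i = (\<Sum>l<L. N $$ (i,l) * x $ l)" by (rule mv_entry[OF N_c x i])
      also have "\<dots> = - (\<Sum>l<L. R $$ (i,l) * x $ l)"
        by (simp add: sum_negf[symmetric]) (rule sum.cong, use i E1S Hb1_c Yjm1_c carrier_matD[OF E1S] in \<open>auto simp: N_def R_def algebra_simps\<close>)
      also have "\<dots> = - (R *\<^sub>v x) $ i" using mv_entry[OF R_c x i] by simp
      finally show "(N *\<^sub>v x) $ i = 0\<^sub>v m $ i" using Rx i by simp
    qed (use N_c in simp)
    have "F *\<^sub>v x = Wj *\<^sub>v (N *\<^sub>v x)" using F_eq assoc_mult_mat_vec[OF Wj_c N_c x] by simp
    also have "\<dots> = 0\<^sub>v n" using Nx Wj_c by (auto intro!: eq_vecI simp: scalar_prod_def)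
    finally have Fx: "F *\<^sub>v x = 0\<^sub>v n" .
    have "vec_space.rank n F = L" using resrank carrier_matD(1)[OF F_c] by (simp add: mrank_def F_def)
    then show ?thesis using vec_space.rank_ker[OF F_c _ x Fx] by blast
  qed
  define M where "M = mat m m (\<lambda>(i,c). if c < p then Hb1 $$ (i,c) else R $$ (i, c - p))"
  have M_c: "M \<in> carrier_mat m m" by (simp add: M_def)
  have Mx: "(M *\<^sub>v x) $ i = (Hb1 *\<^sub>v vec p (\<lambda>c. x $ c)) $ i + (R *\<^sub>v vec L (\<lambda>d. x $ (p+d))) $ i"
    if x: "x \<in> carrier_vec m" and i: "i < m" for x i
  proof -
    have "(M *\<^sub>v x) $ i = (\<Sum>c<p+L. M $$ (i,c) * x $ c)" using mv_entry[OF M_c x i] mp by simp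
    also have "\<dots> = (\<Sum>c<p. M $$ (i,c) * x $ c) + (\<Sum>d<L. M $$ (i,p+d) * x $ (p+d))"
      by (rule sum_lessThan_add)
    also have "\<dots> = (Hb1 *\<^sub>v vec p (\<lambda>c. x $ c)) $ i + (R *\<^sub>v vec L (\<lambda>d. x $ (p+d))) $ i"
      using mv_entry[OF Hb1_c _ i, of "vec p (\<lambda>c. x $ c)"] mv_entry[OF R_c _ i, of "vec L (\<lambda>d. x $ (p+d))"]
        i pm mp by (simp add: M_def)
    finally show ?thesis .
  qed
  have NE1': "mat_adjoint Hb1 * R = 0\<^sub>m p L" by (rule NE1)
  have kerM: "x = 0\<^sub>v m" if x: "x \<in> carrier_vec m" and M0: "M *\<^sub>v x = 0\<^sub>v m" for x
  proof -
    define x1 where "x1 = vec p (\<lambda>c. x $ c)"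
    define x2 where "x2 = vec L (\<lambda>d. x $ (p+d))"
    have x1: "x1 \<in> carrier_vec p" and x2: "x2 \<in> carrier_vec L" by (simp_all add: x1_def x2_def)
    define u where "u = Hb1 *\<^sub>v x1"
    define v where "v = R *\<^sub>v x2"
    have uv: "u $ i = - v $ i" if "i < m" for i
    proof -
      have "(M *\<^sub>v x) $ i = 0" using M0 that by simp
      then show ?thesis using Mx[OF x that] by (simp add: u_def v_def x1_def x2_def eq_neg_iff_add_eq_0)
    qed
    have v_c: "v \<in> carrier_vec m" using R_c x2 by (simp add: v_def)
    have "(\<Sum>i<m. cnj (v $ i) * u $ i) = 0" unfolding u_def v_def by (rule cross[OF Hb1_c R_c x1 x2 NE1'])
    then have "(\<Sum>i<m. cnj (v $ i) * v $ i) = 0"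
      using uv by (simp add: sum_negf)
    then have v0: "v = 0\<^sub>v m" using self_inner_zero v_c by blast
    then have "x2 = 0\<^sub>v L" using kerR x2 by (simp add: v_def)
    moreover have "x1 = 0\<^sub>v p"
    proof (rule kerHb1[OF x1])
      show "Hb1 *\<^sub>v x1 = 0\<^sub>v m"
      proof (rule eq_vecI)
        fix i assume "i < dim_vec (0\<^sub>v m :: complex vec)"
        then have i: "i < m" by simp
        show "(Hb1 *\<^sub>v x1) $ i = 0\<^sub>v m $ i" using uv[OF i] v0 i by (simp add: u_def)
      qed (use Hb1_c in simp)
    qed
    ultimately have z2: "x2 = 0\<^sub>v L" and z1: "x1 = 0\<^sub>v p" by auto
    have X1: "x $ i = 0" if "i < p" for i
    proof -
      have "x1 $ i = 0" using z1 that by simp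
      then show ?thesis using that by (simp add: x1_def)
    qed
    have X2: "x $ (p+d) = 0" if "d < L" for d
    proof -
      have "x2 $ d = 0" using z2 that by simp
      then show ?thesis using that by (simp add: x2_def)
    qed
    show ?thesis
    proof (rule eq_vecI)
      fix i assume "i < dim_vec (0\<^sub>v m :: complex vec)"
      then have i: "i < m" by simp
      show "x $ i = 0\<^sub>v m $ i"
      proof (cases "i < p")
        case True then show ?thesis using X1 i by simp
      next
        case False then show ?thesis using X2[of "i-p"] i mp by simp
      qed
    qed (use x in simp)
  qed
  have decomp: "\<exists>x1\<in>carrier_vec p. \<exists>x2\<in>carrier_vec L. \<forall>i<m. w $ i = (Hb1 *\<^sub>v x1) $ i + (R *\<^sub>v x2) $ i"
    if w: "w \<in> carrier_vec m" for w
  proof -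
    obtain x where x: "x \<in> carrier_vec m" and Mxw: "M *\<^sub>v x = w"
      using vec_space.ker_solve[OF M_c kerM w] by blast
    show ?thesis using Mx[OF x] Mxw by (intro bexI[of _ "vec p (\<lambda>c. x $ c)"] bexI[of _ "vec L (\<lambda>d. x $ (p+d))"]) auto
  qed
  have colH: "col H c = col Hb1 c" if "c < p" for c
    using that pm H_c Hb1_c by (intro eq_vecI) (auto simp: H_def Hb1_def)
  have Hunit: "(H *\<^sub>v unit_vec m c) $ i = H $$ (i,c)" if "i < m" "c < m" for i c
  proof -
    have "(H *\<^sub>v unit_vec m c) $ i = (\<Sum>l<m. H $$ (i,l) * unit_vec m c $ l)"
      by (rule mv_entry[OF H_c unit_vec_carrier that(1)])
    also have "\<dots> = (\<Sum>l<m. if l = c then H $$ (i,l) else 0)"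
      by (rule sum.cong) (auto simp: unit_vec_def)
    finally show ?thesis using that by simp
  qed
  have Runit: "(R *\<^sub>v unit_vec L k) $ i = R $$ (i,k)" if "i < m" "k < L" for i k
  proof -
    have "(R *\<^sub>v unit_vec L k) $ i = (\<Sum>l<L. R $$ (i,l) * unit_vec L k $ l)"
      by (rule mv_entry[OF R_c unit_vec_carrier that(1)])
    also have "\<dots> = (\<Sum>l<L. if l = k then R $$ (i,l) else 0)"
      by (rule sum.cong) (auto simp: unit_vec_def)
    finally show ?thesis using that by simp
  qed
  have orth_range: "\<forall>q<L. \<exists>x1\<in>carrier_vec p. \<forall>i<m. H $$ (i,p+q) = (Hb1 *\<^sub>v x1) $ i"
    if O: "mat_adjoint H * R = 0\<^sub>m m L"
  proof (intro allI impI)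
    fix q assume q: "q < L"
    have pq: "p + q < m" using q mp by simp
    obtain x1 x2 where x1: "x1 \<in> carrier_vec p" and x2: "x2 \<in> carrier_vec L"
      and dec: "\<forall>i<m. col H (p+q) $ i = (Hb1 *\<^sub>v x1) $ i + (R *\<^sub>v x2) $ i"
      using decomp[of "col H (p+q)"] H_c by (metis carrier_matD(1) carrier_vecI dim_col)
    define u where "u = Hb1 *\<^sub>v x1"
    define v where "v = R *\<^sub>v x2"
    have v_c: "v \<in> carrier_vec m" using R_c x2 by (simp add: v_def)
    have c1: "(\<Sum>i<m. cnj (v $ i) * (H *\<^sub>v unit_vec m (p+q)) $ i) = 0"
      unfolding v_def by (rule cross[OF H_c R_c unit_vec_carrier x2 O])
    have c2: "(\<Sum>i<m. cnj (v $ i) * u $ i) = 0"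
      unfolding u_def v_def by (rule cross[OF Hb1_c R_c x1 x2 NE1'])
    have Hi: "(H *\<^sub>v unit_vec m (p+q)) $ i = u $ i + v $ i" if "i < m" for i
      using Hunit[OF that pq] dec that pq H_c by (simp add: u_def v_def)
    have "(\<Sum>i<m. cnj (v $ i) * (H *\<^sub>v unit_vec m (p+q)) $ i)
        = (\<Sum>i<m. cnj (v $ i) * u $ i) + (\<Sum>i<m. cnj (v $ i) * v $ i)"
      by (simp add: Hi distrib_left sum.distrib)
    then have "(\<Sum>i<m. cnj (v $ i) * v $ i) = 0" using c1 c2 by simp
    then have v0: "v = 0\<^sub>v m" using self_inner_zero v_c by blast
    show "\<exists>x1\<in>carrier_vec p. \<forall>i<m. H $$ (i,p+q) = (Hb1 *\<^sub>v x1) $ i"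
    proof (intro bexI[OF _ x1] allI impI)
      fix i assume i: "i < m"
      have "H $$ (i,p+q) = u $ i + v $ i" using Hunit[OF i pq] Hi[OF i] by simp
      then show "H $$ (i,p+q) = (Hb1 *\<^sub>v x1) $ i" using v0 i by (simp add: u_def)
    qed
  qed
  have range_rank: "vec_space.rank m H = p"
    if rg: "\<forall>q<L. \<exists>x1\<in>carrier_vec p. \<forall>i<m. H $$ (i,p+q) = (Hb1 *\<^sub>v x1) $ i"
  proof -
    interpret V: vec_space "TYPE(complex)" m .
    have sub1: "set (cols Hb1) \<subseteq> carrier_vec m" using Hb1_c cols_dim by blast
    have sub2: "set (cols H) \<subseteq> carrier_vec m" using H_c cols_dim by blast
    have "set (cols H) \<subseteq> V.span (set (cols Hb1))"
    proof
      fix v assume "v \<in> set (cols H)"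
      then obtain c where c: "c < m" and vc: "v = col H c" using H_c by (auto simp: in_set_conv_nth)
      show "v \<in> V.span (set (cols Hb1))"
      proof (cases "c < p")
        case True
        have "v \<in> set (cols Hb1)" using True vc colH[OF True] Hb1_c by (auto simp: in_set_conv_nth intro!: exI[of _ c])
        then show ?thesis using V.in_own_span[OF sub1] by blast
      next
        case False
        define q where "q = c - p"
        have q: "q < L" and cq: "c = p + q" using False c mp by (auto simp: q_def)
        obtain x1 where x1: "x1 \<in> carrier_vec p" and hx: "\<forall>i<m. H $$ (i,p+q) = (Hb1 *\<^sub>v x1) $ i"
          using rg q by blast
        have "v = Hb1 *\<^sub>v x1" using hx vc cq c H_c Hb1_c by (intro eq_vecI) auto
        then have "v \<in> V.col_space Hb1" using V.col_space_eq[OF Hb1_c] x1 Hb1_c by auto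
        then show ?thesis by (simp add: V.col_space_def)
      qed
    qed
    then have s1: "V.span (set (cols H)) \<subseteq> V.span (set (cols Hb1))" by (rule V.span_subsetI[OF sub1])
    have "set (cols Hb1) \<subseteq> set (cols H)"
    proof
      fix v assume "v \<in> set (cols Hb1)"
      then obtain c where c: "c < p" and vc: "v = col Hb1 c" using Hb1_c by (auto simp: in_set_conv_nth)
      then show "v \<in> set (cols H)" using colH[OF c] H_c pm by (auto simp: in_set_conv_nth intro!: exI[of _ c])
    qed
    then have "set (cols Hb1) \<subseteq> V.span (set (cols H))" using V.in_own_span[OF sub2] by blast
    then have s2: "V.span (set (cols Hb1)) \<subseteq> V.span (set (cols H))" by (rule V.span_subsetI[OF sub2])
    have "V.span (set (cols H)) = V.span (set (cols Hb1))" using s1 s2 by blast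
    then have "V.rank H = V.rank Hb1" by (simp add: V.rank_def)
    also have "V.rank Hb1 = p" by (rule V.ker_rank[OF Hb1_c kerHb1])
    finally show ?thesis .
  qed
  have rank_range: "\<forall>q<L. \<exists>x1\<in>carrier_vec p. \<forall>i<m. H $$ (i,p+q) = (Hb1 *\<^sub>v x1) $ i"
    if rk: "vec_space.rank m H = p"
  proof (intro allI impI, rule ccontr)
    fix q assume q: "q < L" and nr: "\<not> (\<exists>x1\<in>carrier_vec p. \<forall>i<m. H $$ (i,p+q) = (Hb1 *\<^sub>v x1) $ i)"
    interpret V: vec_space "TYPE(complex)" m .
    have pq: "p + q < m" using q mp by simp
    define K where "K = mat m (p+1) (\<lambda>(i,c). if c < p then Hb1 $$ (i,c) else H $$ (i,p+q))"
    have K_c: "K \<in> carrier_mat m (p+1)" by (simp add: K_def)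
    have kerK: "x = 0\<^sub>v (p+1)" if x: "x \<in> carrier_vec (p+1)" and K0: "K *\<^sub>v x = 0\<^sub>v m" for x
    proof -
      define x1 where "x1 = vec p (\<lambda>c. x $ c)"
      have x1: "x1 \<in> carrier_vec p" by (simp add: x1_def)
      have Kx: "(Hb1 *\<^sub>v x1) $ i + H $$ (i,p+q) * x $ p = 0" if i: "i < m" for i
      proof -
        have "0 = (K *\<^sub>v x) $ i" using K0 i by simp
        also have "\<dots> = (\<Sum>c<Suc p. K $$ (i,c) * x $ c)" using mv_entry[OF K_c x i] by simp
        also have "\<dots> = (\<Sum>c<p. Hb1 $$ (i,c) * x $ c) + H $$ (i,p+q) * x $ p"
          using i by (simp add: K_def)
        also have "(\<Sum>c<p. Hb1 $$ (i,c) * x $ c) = (Hb1 *\<^sub>v x1) $ i"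
          using mv_entry[OF Hb1_c x1 i] by (simp add: x1_def)
        finally show ?thesis by simp
      qed
      have xp: "x $ p = 0"
      proof (rule ccontr)
        assume xp: "x $ p \<noteq> 0"
        define y where "y = vec p (\<lambda>c. - x $ c / x $ p)"
        have y: "y \<in> carrier_vec p" by (simp add: y_def)
        have "H $$ (i,p+q) = (Hb1 *\<^sub>v y) $ i" if i: "i < m" for i
        proof -
          have "(Hb1 *\<^sub>v y) $ i = (\<Sum>c<p. Hb1 $$ (i,c) * (- x $ c / x $ p))"
            using mv_entry[OF Hb1_c y i] by (simp add: y_def)
          also have "\<dots> = - (\<Sum>c<p. Hb1 $$ (i,c) * x $ c) / x $ p"
            by (simp add: sum_divide_distrib sum_negf)
          also have "(\<Sum>c<p. Hb1 $$ (i,c) * x $ c) = (Hb1 *\<^sub>v x1) $ i"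
            using mv_entry[OF Hb1_c x1 i] by (simp add: x1_def)
          also have "(Hb1 *\<^sub>v x1) $ i = - (H $$ (i,p+q) * x $ p)" using Kx[OF i] by (simp add: eq_neg_iff_add_eq_0)
          finally show ?thesis using xp by simp
        qed
        then show False using nr y by blast
      qed
      have "Hb1 *\<^sub>v x1 = 0\<^sub>v m"
      proof (rule eq_vecI)
        fix i assume "i < dim_vec (0\<^sub>v m :: complex vec)"
        then have i: "i < m" by simp
        show "(Hb1 *\<^sub>v x1) $ i = 0\<^sub>v m $ i" using Kx[OF i] xp i by simp
      qed (use Hb1_c in simp)
      then have z1: "x1 = 0\<^sub>v p" using kerHb1 x1 by blast
      show ?thesis
      proof (rule eq_vecI)
        fix c assume "c < dim_vec (0\<^sub>v (p+1) :: complex vec)"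
        then have c: "c < p + 1" by simp
        show "x $ c = 0\<^sub>v (p+1) $ c"
        proof (cases "c < p")
          case True
          have "x1 $ c = 0" using z1 True by simp
          then show ?thesis using True c by (simp add: x1_def)
        next
          case False then have "c = p" using c by simp
          then show ?thesis using xp c by simp
        qed
      qed (use x in simp)
    qed
    have li: "V.lin_indpt (set (cols K))" by (rule V.ker_indpt[OF K_c kerK])
    have dK: "distinct (cols K)" by (rule ker_distinct[OF K_c kerK])
    have cardK: "card (set (cols K)) = p + 1" using dK K_c by (simp add: distinct_card)
    have subK: "set (cols K) \<subseteq> set (cols H)"
    proof
      fix v assume "v \<in> set (cols K)"
      then obtain c where c: "c < p + 1" and vc: "v = col K c" using K_c by (auto simp: in_set_conv_nth)
      define c' where "c' = (if c < p then c else p + q)"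
      have c': "c' < m" using pq pm by (simp add: c'_def)
      have "v = col H c'" using vc c c' K_c H_c
        by (intro eq_vecI) (auto simp: K_def c'_def H_def Hb1_def)
      then show "v \<in> set (cols H)" using c' H_c by (auto simp: in_set_conv_nth intro!: exI[of _ c'])
    qed
    have "p + 1 \<le> V.rank H" using V.rank_ge_card_indpt[OF H_c subK li] cardK by simp
    then show False using rk by simp
  qed
  have range_orth: "mat_adjoint H * R = 0\<^sub>m m L"
    if rg: "\<forall>q<L. \<exists>x1\<in>carrier_vec p. \<forall>i<m. H $$ (i,p+q) = (Hb1 *\<^sub>v x1) $ i"
  proof (rule eq_matI)
    fix c k assume "c < dim_row (0\<^sub>m m L :: complex mat)" "k < dim_col (0\<^sub>m m L :: complex mat)"
    then have c: "c < m" and k: "k < L" by auto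
    have e: "(mat_adjoint H * R) $$ (c,k) = (\<Sum>i<m. cnj (H $$ (i,c)) * R $$ (i,k))"
      using mult_entry[OF adj_carrier[OF H_c] R_c c k] adj_index[OF H_c] c by simp
    show "(mat_adjoint H * R) $$ (c,k) = 0\<^sub>m m L $$ (c,k)"
    proof (cases "c < p")
      case True
      have "(\<Sum>i<m. cnj (H $$ (i,c)) * R $$ (i,k)) = (mat_adjoint Hb1 * R) $$ (c,k)"
        using mult_entry[OF adj_carrier[OF Hb1_c] R_c True k] adj_index[OF Hb1_c] True pm
        by (auto simp: H_def Hb1_def intro!: sum.cong)
      then show ?thesis using e NE1 True k c by simp
    next
      case False
      define q where "q = c - p"
      have q: "q < L" and cq: "c = p + q" using False c mp by (auto simp: q_def)
      obtain x1 where x1: "x1 \<in> carrier_vec p" and hx: "\<forall>i<m. H $$ (i,p+q) = (Hb1 *\<^sub>v x1) $ i"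
        using rg q by blast
      have "(\<Sum>i<m. cnj (H $$ (i,c)) * R $$ (i,k)) = (\<Sum>i<m. cnj ((Hb1 *\<^sub>v x1) $ i) * (R *\<^sub>v unit_vec L k) $ i)"
        using hx cq Runit k by (auto intro!: sum.cong)
      also have "\<dots> = cnj (\<Sum>i<m. cnj ((R *\<^sub>v unit_vec L k) $ i) * (Hb1 *\<^sub>v x1) $ i)"
        by (simp add: cnj_sum mult.commute)
      also have "(\<Sum>i<m. cnj ((R *\<^sub>v unit_vec L k) $ i) * (Hb1 *\<^sub>v x1) $ i) = 0"
        by (rule cross[OF Hb1_c R_c x1 unit_vec_carrier NE1'])
      finally show ?thesis using e c k by simp
    qed
  qed (use adj_carrier[OF H_c] R_c in auto)
  have Hdef: "lead_sub Hb (j*L) (j*L) = H" by (simp add: H_def m_def)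
  have mrH: "mrank H = vec_space.rank m H" using H_c by (simp add: mrank_def)
  have main: "(\<not> invertible_mat H \<and> mrank H = p) \<longleftrightarrow> mat_adjoint H * R = 0\<^sub>m m L"
  proof
    assume "\<not> invertible_mat H \<and> mrank H = p"
    then show "mat_adjoint H * R = 0\<^sub>m m L" using range_orth rank_range mrH by simp
  next
    assume O: "mat_adjoint H * R = 0\<^sub>m m L"
    have rk: "vec_space.rank m H = p" using range_rank orth_range[OF O] by simp
    have "\<not> invertible_mat H"
    proof
      assume "invertible_mat H"
      then have "vec_space.rank m H = m" using vec_space.ker_rank[OF H_c] inv_ker[OF H_c] by blast
      then show False using rk pm by simp
    qed
    then show "\<not> invertible_mat H \<and> mrank H = p" using rk mrH by simp
  qed
  show ?thesis using main stag_iff YZ_iff Hdef by (simp add: p_def)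
qed
end
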